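(* Let $h>0$, $P>0$, $0<\zeta\le1$, $\sigma_A^2>0$, $\sigma_{\rm cov}^2>0$, $P_S>0$, and $Q\in[0,\zeta hP)$. Define $$a=\sigma_{\rm cov}^2-\frac{\sigma_A^2P_S}{\zeta hP},\quad b=\sigma_A^2\Big(1-\frac{Q}{\zeta hP}\Big),\quad c=-\frac{P_S}{\zeta},\quad d=hP\Big(1-\frac{Q}{\zeta hP}\Big),$$ and $$R(s)=s\log_2\!\Big(1+\frac{cs+d}{as+b}\Big).$$ Then $R$ is (well defined and) concave on the interval $s\in\Big[\frac{d}{hP-c},\ \min\{-\frac dc,1\}\Big]$.
   Context: $R(s)$ is the rate achieved on the boundary of the OPS rate-energy region of a separated receiver with circuit power $P_S$ when the harvested net energy equals $Q$, as a function of $s=1-\alpha$, the fraction of time the information decoder is on; $\sigma_A^2$ is antenna noise power, $\sigma_{\rm cov}^2$ conversion noise power, $\zeta$ harvesting efficiency, $hP$ the received power. *)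

theory Defs
  imports "HOL-Analysis.Analysis"
begin

end

theory Submission
  imports Defs "HOL-Analysis.Analysis"
begin

lemma dln: fixes al be s :: real assumes "al * s + be>0"
  shows "((\<lambda>s. ln(al * s + be)) has_real_derivative al/(al * s + be)) (at s)"
proof -
  have "((\<lambda>s. al * s + be) has_real_derivative al) (at s)"
    using DERIV_add[OF DERIV_cmult[OF DERIV_ident, of al] DERIV_const[of be]] by simp
  from DERIV_chain2[OF DERIV_ln[OF assms] this] show ?thesis by (simp add: divide_inverse mult.commute)
qed
lemma dinv: fixes al be s :: real assumes "al * s + be>0"
  shows "((\<lambda>s. al/(al * s + be)) has_real_derivative -(al*al)/(al * s + be)^2) (at s)"
proof -
  have "((\<lambda>s. al * s + be) has_real_derivative al) (at s)"
    using DERIV_add[OF DERIV_cmult[OF DERIV_ident, of al] DERIV_const[of be]] by simp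
  from DERIV_inverse_fun[OF this] assms
  have "((\<lambda>s. inverse (al * s + be)) has_real_derivative - (al * inverse ((al * s + be)^2))) (at s)"
    by (simp add: power2_eq_square)
  from DERIV_cmult[OF this, of al] show ?thesis
    by (simp add: divide_inverse power2_eq_square mult.assoc)
qed
lemma iden: fixes a b c d s u v :: real
  assumes u: "u = (a+c) * s + (b+d)" and v: "v = a * s + b" and up: "u > 0" and vp: "v > 0"
  shows "2*((a+c)/u - a/v) + s*(-((a+c)*(a+c))/u^2 + (a*a)/v^2) = (c*b - a*d)/(u * v) * ((b+d)/u + b/v)"
proof -
  define p where "p = (a+c)/u"
  define q where "q = a/v"
  have bd: "b+d = u - (a+c) * s" and bb: "b = v - a * s" using u v by simp_all
  have e: "c*b - a*d = (a+c) * v - a*u" using u v by (simp add: algebra_simps)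
  have e1: "((a+c) * v - a*u)/(u * v) = p - q" unfolding p_def q_def using up vp by (simp add: diff_divide_distrib)
  have e2: "(u - (a+c) * s)/u = 1 - s*p" unfolding p_def using up by (simp add: diff_divide_distrib)
  have e3: "(v - a * s)/v = 1 - s*q" unfolding q_def using vp by (simp add: diff_divide_distrib)
  have e4: "((a+c)*(a+c))/u^2 = p*p" unfolding p_def by (simp add: power2_eq_square)
  have e5: "(a*a)/v^2 = q*q" unfolding q_def by (simp add: power2_eq_square)
  have "2*((a+c)/u - a/v) + s*(-((a+c)*(a+c))/u^2 + (a*a)/v^2) = 2*(p-q) + s*(-(p*p) + q*q)"
    unfolding p_def[symmetric] q_def[symmetric] minus_divide_left[symmetric] e4 e5 by simp
  also have "\<dots> = (p - q) * ((1 - s*p) + (1 - s*q))" by (simp add: algebra_simps)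
  also have "\<dots> = (c*b - a*d)/(u * v) * ((b+d)/u + b/v)"
    unfolding e e1 bd[symmetric] bb[symmetric] e2[symmetric] e3[symmetric] ..
  finally show ?thesis .
qed
lemma gen_concave:
  fixes a b c d :: real and C :: "real set"
  assumes C: "convex C" and pos1: "\<And>s. s\<in>C \<Longrightarrow> a * s + b > 0"
    and pos2: "\<And>s. s\<in>C \<Longrightarrow> (a+c) * s + (b+d) > 0"
    and b: "b > 0" and bd: "b + d > 0" and cb: "c*b - a*d \<le> 0"
  shows "concave_on C (\<lambda>s. s * (ln ((a+c) * s + (b+d)) - ln (a * s + b)) / ln 2)"
proof (rule f''_le0_imp_concave[OF C])
  fix s assume s: "s \<in> C"
  note p1 = pos1[OF s] and p2 = pos2[OF s]
  have L: "((\<lambda>s. ln ((a+c) * s + (b+d)) - ln (a * s + b)) has_real_derivative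
      (a+c)/((a+c) * s + (b+d)) - a/(a * s + b)) (at s)"
    by (rule DERIV_diff[OF dln[OF p2] dln[OF p1]])
  have "((\<lambda>s. s * (ln ((a+c) * s + (b+d)) - ln (a * s + b))) has_real_derivative
     1 * (ln ((a+c) * s + (b+d)) - ln (a * s + b)) + ((a+c)/((a+c) * s + (b+d)) - a/(a * s + b)) * s) (at s)"
    by (rule DERIV_mult[OF DERIV_ident L])
  from DERIV_cdivide[OF this, of "ln 2"]
  show "((\<lambda>s. s * (ln ((a+c) * s + (b+d)) - ln (a * s + b)) / ln 2) has_real_derivative
     ((ln ((a+c) * s + (b+d)) - ln (a * s + b)) + s*((a+c)/((a+c) * s + (b+d)) - a/(a * s + b)))/ln 2) (at s)"
    by (simp add: mult.commute)
  have M: "((\<lambda>s. (a+c)/((a+c) * s + (b+d)) - a/(a * s + b)) has_real_derivative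
     -((a+c)*(a+c))/((a+c) * s + (b+d))^2 - (-(a*a)/(a * s + b)^2)) (at s)"
    by (rule DERIV_diff[OF dinv[OF p2] dinv[OF p1]])
  have "((\<lambda>s. s*((a+c)/((a+c) * s + (b+d)) - a/(a * s + b))) has_real_derivative
     1 * ((a+c)/((a+c) * s + (b+d)) - a/(a * s + b)) + (-((a+c)*(a+c))/((a+c) * s + (b+d))^2 - (-(a*a)/(a * s + b)^2)) * s) (at s)"
    by (rule DERIV_mult[OF DERIV_ident M])
  from DERIV_cdivide[OF DERIV_add[OF L this], of "ln 2"]
  have "((\<lambda>s. ((ln ((a+c) * s + (b+d)) - ln (a * s + b)) + s*((a+c)/((a+c) * s + (b+d)) - a/(a * s + b)))/ln 2) has_real_derivative
     (2*((a+c)/((a+c) * s + (b+d)) - a/(a * s + b)) + s*(-((a+c)*(a+c))/((a+c) * s + (b+d))^2 + (a*a)/(a * s + b)^2)) / ln 2) (at s)"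
    by (simp add: algebra_simps)
  then show "((\<lambda>s. ((ln ((a+c) * s + (b+d)) - ln (a * s + b)) + s*((a+c)/((a+c) * s + (b+d)) - a/(a * s + b)))/ln 2) has_real_derivative
     (c*b - a*d)/(((a+c) * s + (b+d))*(a * s + b)) * ((b+d)/((a+c) * s + (b+d)) + b/(a * s + b)) / ln 2) (at s)"
    unfolding iden[OF refl refl p2 p1] .
  have X: "(c*b - a*d)/(((a+c) * s + (b+d))*(a * s + b)) \<le> 0"
    using cb p1 p2 by (simp add: divide_nonpos_pos)
  have Y: "(b+d)/((a+c) * s + (b+d)) + b/(a * s + b) \<ge> 0" using p1 p2 b bd by simp
  show "(c*b - a*d)/(((a+c) * s + (b+d))*(a * s + b)) * ((b+d)/((a+c) * s + (b+d)) + b/(a * s + b)) / ln 2 \<le> 0"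
    by (rule divide_nonpos_pos[OF mult_nonpos_nonneg[OF X Y]]) simp
qed

lemma concave_cong:
  assumes "concave_on C g" shows "(\<And>s. s \<in> C \<Longrightarrow> f s = g s) \<Longrightarrow> concave_on C (f::real\<Rightarrow>real)"
  using assms unfolding concave_on_def convex_on_def
  by (auto simp: convex_def)

theorem lemma1:
  fixes h P \<zeta> \<sigma>A2 \<sigma>cov2 PS Q :: real
    and a b c d :: real and R :: "real \<Rightarrow> real"
  assumes "h > 0" "P > 0" "0 < \<zeta>" "\<zeta> \<le> 1" "\<sigma>A2 > 0" "\<sigma>cov2 > 0" "PS > 0"
    and "0 \<le> Q" "Q < \<zeta> * h * P"
  defines "a \<equiv> \<sigma>cov2 - \<sigma>A2 * PS / (\<zeta> * h * P)"
    and "b \<equiv> \<sigma>A2 * (1 - Q / (\<zeta> * h * P))"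
    and "c \<equiv> - PS / \<zeta>"
    and "d \<equiv> h * P * (1 - Q / (\<zeta> * h * P))"
    and "R \<equiv> (\<lambda>s. s * log 2 (1 + (c * s + d) / (a * s + b)))"
  shows "(\<forall>s \<in> {d / (h * P - c) .. min (- d / c) 1}.
            a * s + b \<noteq> 0 \<and> 1 + (c * s + d) / (a * s + b) > 0)
         \<and> concave_on {d / (h * P - c) .. min (- d / c) 1} R"
proof -
  define K where "K = \<zeta> * h * P"
  define t where "t = 1 - Q / K"
  have K: "K > 0" using assms unfolding K_def by simp
  have t: "t > 0" using assms K unfolding t_def K_def by (simp add: field_simps)
  have b': "b = \<sigma>A2 * t" and d': "d = h * P * t" unfolding b_def d_def t_def K_def by simp_all
  have bpos: "b > 0" using b' t assms by simp
  have dpos: "d > 0" using d' t assms by simp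
  have cneg: "c < 0" unfolding c_def using assms by simp
  have key: "a * s + b = \<sigma>cov2 * s + \<sigma>A2 / (h * P) * (c * s + d)" for s
    unfolding a_def b_def c_def d_def using assms by (simp add: field_simps)
  have cbad: "c * b - a * d = - h * P * t * \<sigma>cov2"
    unfolding b' d' unfolding a_def c_def t_def K_def using assms by (simp add: field_simps)
  define C where "C = {d / (h * P - c) .. min (- d / c) 1}"
  have mem: "s > 0 \<and> c * s + d \<ge> 0" if "s \<in> C" for s
  proof -
    have "h * P - c > 0" using cneg mult_pos_pos[OF assms(1,2)] by linarith
    hence "d / (h * P - c) > 0" using dpos by simp
    moreover have "s \<le> - d / c" using that unfolding C_def by simp
    hence "s * (-c) \<le> (- d / c) * (-c)" using cneg by (intro mult_right_mono) auto
    hence "c * s \<ge> - d" using cneg by (simp add: algebra_simps)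
    ultimately show ?thesis using that unfolding C_def by auto
  qed
  have pos1: "a * s + b > 0" if "s \<in> C" for s
  proof -
    have "\<sigma>A2 / (h * P) * (c * s + d) \<ge> 0" using mem[OF that] assms(1,2,5) by simp
    moreover have "\<sigma>cov2 * s > 0" using mem[OF that] assms(6) by simp
    ultimately show ?thesis unfolding key by linarith
  qed
  have pos2: "(a + c) * s + (b + d) > 0" if "s \<in> C" for s
    using pos1[OF that] mem[OF that] by (simp add: algebra_simps)
  have eq: "R s = s * (ln ((a + c) * s + (b + d)) - ln (a * s + b)) / ln 2" if "s \<in> C" for s
  proof -
    have "1 + (c * s + d) / (a * s + b) = ((a + c) * s + (b + d)) / (a * s + b)"
      using pos1[OF that] by (simp add: field_simps)
    thus ?thesis unfolding R_def log_def using pos1[OF that] pos2[OF that] by (simp add: ln_div)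
  qed
  have g: "concave_on C (\<lambda>s. s * (ln ((a + c) * s + (b + d)) - ln (a * s + b)) / ln 2)"
  proof (rule gen_concave)
    show "convex C" unfolding C_def by (rule convex_real_interval)
    show "b + d > 0" using bpos dpos by simp
    have "h * P * t * \<sigma>cov2 > 0" using assms(1,2,6) t by simp
    thus "c * b - a * d \<le> 0" unfolding cbad by simp
  qed (use pos1 pos2 bpos in auto)
  have "concave_on C R" using concave_cong[OF g] eq by blast
  moreover have "\<forall>s\<in>C. a * s + b \<noteq> 0 \<and> 1 + (c * s + d) / (a * s + b) > 0"
  proof
    fix s assume s: "s \<in> C"
    have "1 + (c * s + d) / (a * s + b) = ((a + c) * s + (b + d)) / (a * s + b)"
      using pos1[OF s] by (simp add: field_simps)
    thus "a * s + b \<noteq> 0 \<and> 1 + (c * s + d) / (a * s + b) > 0" using pos1[OF s] pos2[OF s] by simp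
  qed
  ultimately show ?thesis unfolding C_def by (intro conjI)
qed

end
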